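(* Let $x,y$ be allocation rules of $n$-agent rank-based auctions, with bids from the all-pay auction with rule $x$. If $\delta_N\le 1/n$, then $$\int_{[0,\delta_N]\cup[1-\delta_N,1]} Z_y(q)\,b'(q)\,dq\le e\,\delta_N\,y'(\delta_N)+e\,\delta_N^2\,y'(1-\delta_N).$$
   Context: Agents have values i.i.d. from a continuous distribution $F$ on $[0,1]$; quantile $q=F(v)$, $v(q)=F^{-1}(q)$. For $k\in\{1,\dots,n-1\}$ the $k$-highest-bids-win allocation rule is $x_k(q)=\sum_{i=0}^{k-1}\binom{n-1}{i}q^{n-1-i}(1-q)^i$; $x_0\equiv0$, $x_n\equiv1$. A rank-based auction with position weights $1\ge w_1\ge\cdots\ge w_n\ge 0$ ($w_{n+1}:=0$) has allocation rule $\sum_{k=1}^{n}(w_k-w_{k+1})x_k(q)$. In the all-pay auction with rule $x$, the Bayes–Nash equilibrium bid function satisfies $b(0)=0$, $b'(q)=v(q)x'(q)$. $Z_y(q)=(1-q)\,y'(q)/x'(q)$. $\delta_N=\max(25\log\log N,n)/N$ for a sample size $N$. *)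

theory Defs
  imports "HOL-Probability.Probability"
begin

text \<open>k-highest-bids-win allocation rule for n agents, as a function of the quantile q;
  x_0 = 0 and x_n = 1.\<close>
definition xk :: "nat \<Rightarrow> nat \<Rightarrow> real \<Rightarrow> real" where
  "xk n k q = (if k = 0 then 0 else if k \<ge> n then 1
     else (\<Sum>i<k. real (n - 1 choose i) * q ^ (n - 1 - i) * (1 - q) ^ i))"

definition rank_alloc :: "nat \<Rightarrow> (nat \<Rightarrow> real) \<Rightarrow> real \<Rightarrow> real" where
  "rank_alloc n w q = (\<Sum>k=1..n. (w k - (if k = n then 0 else w (Suc k))) * xk n k q)"

definition rank_based_alloc :: "nat \<Rightarrow> (real \<Rightarrow> real) \<Rightarrow> bool" where
  "rank_based_alloc n x \<longleftrightarrow>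
     (\<exists>w. w 1 \<le> 1 \<and> (\<forall>k\<in>{1..<n}. w (Suc k) \<le> w k) \<and> 0 \<le> w n \<and> x = rank_alloc n w)"

definition value_of_quantile :: "real measure \<Rightarrow> real \<Rightarrow> real" where
  "value_of_quantile M q = Inf {t \<in> {0..1}. q \<le> cdf M t}"

text \<open>Derivative of the all-pay equilibrium bid: b'(q) = v(q) x'(q).\<close>
definition bid_deriv :: "real measure \<Rightarrow> (real \<Rightarrow> real) \<Rightarrow> real \<Rightarrow> real" where
  "bid_deriv M x q = value_of_quantile M q * deriv x q"

definition Zfun :: "(real \<Rightarrow> real) \<Rightarrow> (real \<Rightarrow> real) \<Rightarrow> real \<Rightarrow> real" where
  "Zfun y x q = (1 - q) * deriv y q / deriv x q"

definition deltaN :: "nat \<Rightarrow> nat \<Rightarrow> real" where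
  "deltaN n N = max (25 * ln (ln (real N))) (real n) / real N"

end

theory Submission
  imports Defs
begin

lemma psum_deriv:
  fixes m k :: nat and q :: real
  assumes "1 \<le> k" "k \<le> m"
  shows "((\<lambda>q. \<Sum>i<k. real (m choose i) * q ^ (m - i) * (1 - q) ^ i) has_real_derivative
          real m * real (m - 1 choose (k - 1)) * q ^ (m - k) * (1 - q) ^ (k - 1)) (at q)"
  using assms
proof (induction k)
  case 0 then show ?case by simp
next
  case (Suc k)
  show ?case
  proof (cases "k = 0")
    case True
    have "((\<lambda>q. q ^ m) has_real_derivative real m * q ^ (m - 1)) (at q)"
      by (auto intro!: derivative_eq_intros)
    then show ?thesis using True by simp
  next
    case False
    have IH: "((\<lambda>q. \<Sum>i<k. real (m choose i) * q ^ (m - i) * (1 - q) ^ i) has_real_derivative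
          real m * real (m - 1 choose (k - 1)) * q ^ (m - k) * (1 - q) ^ (k - 1)) (at q)"
      using Suc False by simp
    have T: "((\<lambda>q. real (m choose k) * q ^ (m - k) * (1 - q) ^ k) has_real_derivative
       real (m choose k) * (real (m - k) * q ^ (m - k - 1) * (1 - q) ^ k
         - q ^ (m - k) * (real k * (1 - q) ^ (k - 1)))) (at q)"
      by (auto intro!: derivative_eq_intros simp: algebra_simps)
    have e1: "q ^ (m - k) = q * q ^ (m - Suc k)" using Suc.prems
      by (metis Suc_diff_Suc Suc_le_lessD diff_Suc_1 power_Suc)
    have e2: "(1 - q) ^ k = (1 - q) * (1 - q) ^ (k - 1)" using False
      by (metis Suc_pred' not_gr0 power_Suc)
    have b1: "real k * real (m choose k) = real m * real (m - 1 choose (k - 1))"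
      using times_binomial_minus1_eq[of k m] False by (metis of_nat_mult not_gr0)
    have b2: "real (m - k) * real (m choose k) = real m * real (m - 1 choose k)"
      using binomial_absorb_comp[of m k] by (metis of_nat_mult)
    have "real m * real (m - 1 choose (k - 1)) * q ^ (m - k) * (1 - q) ^ (k - 1) +
       real (m choose k) * (real (m - k) * q ^ (m - k - 1) * (1 - q) ^ k
         - q ^ (m - k) * (real k * (1 - q) ^ (k - 1)))
       = real m * real (m - 1 choose (Suc k - 1)) * q ^ (m - Suc k) * (1 - q) ^ (Suc k - 1)"
    proof -
      have "real (m choose k) * (q ^ (m - k) * (real k * (1 - q) ^ (k - 1)))
          = (real k * real (m choose k)) * q ^ (m - k) * (1 - q) ^ (k - 1)" by simp
      also have "\<dots> = real m * real (m - 1 choose (k - 1)) * q ^ (m - k) * (1 - q) ^ (k - 1)"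
        using b1 by simp
      finally have c1: "real (m choose k) * (q ^ (m - k) * (real k * (1 - q) ^ (k - 1)))
          = real m * real (m - 1 choose (k - 1)) * q ^ (m - k) * (1 - q) ^ (k - 1)" .
      have "real (m choose k) * (real (m - k) * q ^ (m - k - 1) * (1 - q) ^ k)
          = (real (m - k) * real (m choose k)) * q ^ (m - Suc k) * (1 - q) ^ k" by simp
      also have "\<dots> = real m * real (m - 1 choose k) * q ^ (m - Suc k) * (1 - q) ^ k"
        using b2 by simp
      finally have c2: "real (m choose k) * (real (m - k) * q ^ (m - k - 1) * (1 - q) ^ k)
          = real m * real (m - 1 choose k) * q ^ (m - Suc k) * (1 - q) ^ k" .
      show ?thesis unfolding right_diff_distrib c1 c2 by simp
    qed
    moreover have "((\<lambda>q. \<Sum>i<Suc k. real (m choose i) * q ^ (m - i) * (1 - q) ^ i) has_real_derivative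
       real m * real (m - 1 choose (k - 1)) * q ^ (m - k) * (1 - q) ^ (k - 1) +
       real (m choose k) * (real (m - k) * q ^ (m - k - 1) * (1 - q) ^ k
         - q ^ (m - k) * (real k * (1 - q) ^ (k - 1)))) (at q)"
      unfolding sum.lessThan_Suc by (rule DERIV_add[OF IH T])
    ultimately show ?thesis by simp
  qed
qed

definition dd :: "nat \<Rightarrow> nat \<Rightarrow> real \<Rightarrow> real" where
  "dd n k q = (if 1 \<le> k \<and> k < n then real (n - 1) * real (n - 1 - 1 choose (k - 1))
      * q ^ (n - 1 - k) * (1 - q) ^ (k - 1) else 0)"

lemma xk_deriv:
  assumes "1 \<le> k" "k \<le> n"
  shows "(xk n k has_real_derivative dd n k q) (at q)"
proof (cases "k < n")
  case True
  have "xk n k = (\<lambda>q. \<Sum>i<k. real (n - 1 choose i) * q ^ (n - 1 - i) * (1 - q) ^ i)"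
    using assms True by (auto simp: xk_def fun_eq_iff)
  moreover have "dd n k q = real (n - 1) * real (n - 1 - 1 choose (k - 1)) * q ^ (n - 1 - k) * (1 - q) ^ (k - 1)"
    using assms True by (simp add: dd_def)
  ultimately show ?thesis using psum_deriv[of k "n - 1" q] assms True by simp
next
  case False
  then have "xk n k = (\<lambda>q. 1)" using assms by (auto simp: xk_def fun_eq_iff)
  moreover have "dd n k q = 0" using False by (simp add: dd_def)
  ultimately show ?thesis by simp
qed

lemma rank_deriv:
  "(rank_alloc n w has_real_derivative
     (\<Sum>k=1..n. (w k - (if k = n then 0 else w (Suc k))) * dd n k q)) (at q)"
proof -
  have "rank_alloc n w = (\<lambda>q. \<Sum>k=1..n. (w k - (if k = n then 0 else w (Suc k))) * xk n k q)"
    by (simp add: rank_alloc_def fun_eq_iff)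
  moreover have "((\<lambda>q. \<Sum>k=1..n. (w k - (if k = n then 0 else w (Suc k))) * xk n k q) has_real_derivative
     (\<Sum>k=1..n. (w k - (if k = n then 0 else w (Suc k))) * dd n k q)) (at q)"
    by (intro DERIV_sum DERIV_cmult xk_deriv) auto
  ultimately show ?thesis by simp
qed

lemma exp_bound:
  fixes d :: real
  assumes "n \<ge> 1" "0 \<le> d" "d \<le> 1 / real n" "j \<le> n - 1"
  shows "1 \<le> exp 1 * (1 - d) ^ j"
proof -
  have d1: "d \<le> 1" using assms by (smt (verit) divide_le_eq_1 of_nat_1 of_nat_mono)
  have "(1 - 1 / real n) ^ (n - 1) \<le> (1 - d) ^ (n - 1)"
    using assms by (intro power_mono) (auto simp: divide_simps algebra_simps)
  also have "\<dots> \<le> (1 - d) ^ j" using assms d1 by (intro power_decreasing) auto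
  finally have A: "(1 - 1 / real n) ^ (n - 1) \<le> (1 - d) ^ j" .
  have B: "exp (-1::real) \<le> (1 - 1 / real n) ^ (n - 1)"
  proof (cases "n = 1")
    case True then show ?thesis by simp
  next
    case False
    then have n2: "n \<ge> 2" using assms by simp
    define t where "t = 1 / real (n - 1)"
    have tpos: "t > 0" using n2 by (simp add: t_def)
    have "1 + t \<le> exp t" by simp
    then have "exp (-t) \<le> 1 / (1 + t)"
      using tpos by (simp add: exp_minus divide_simps)
    also have "1 / (1 + t) = 1 - 1 / real n"
      using n2 by (simp add: t_def of_nat_diff divide_simps) 
    finally have C: "exp (-t) \<le> 1 - 1 / real n" .
    have "exp (-1) = exp (-t) ^ (n - 1)"
      using n2 by (simp add: t_def exp_of_nat_mult[symmetric] of_nat_diff)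
    also have "\<dots> \<le> (1 - 1 / real n) ^ (n - 1)"
      using C by (intro power_mono) auto
    finally show ?thesis .
  qed
  have "1 = exp (1::real) * exp (-1)" using exp_minus_inverse[of "1::real"] by simp
  also have "\<dots> \<le> exp 1 * (1 - d) ^ j" using A B by simp
  finally show ?thesis .
qed

lemma dd_nonneg: "0 \<le> q \<Longrightarrow> q \<le> 1 \<Longrightarrow> 0 \<le> dd n k q"
  by (simp add: dd_def)

lemma dd_low:
  fixes d q :: real
  assumes "n \<ge> 1" "0 \<le> q" "q \<le> d" "d \<le> 1 / real n"
  shows "dd n k q \<le> exp 1 * dd n k d"
proof (cases "1 \<le> k \<and> k < n")
  case True
  define C where "C = real (n - 1) * real (n - 1 - 1 choose (k - 1))"
  have C0: "0 \<le> C" by (simp add: C_def)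
  have d1: "d \<le> 1" using assms by (smt (verit) divide_le_eq_1 of_nat_1 of_nat_mono)
  have a: "q ^ (n - 1 - k) \<le> d ^ (n - 1 - k)" using assms by (intro power_mono) auto
  have b: "(1 - q) ^ (k - 1) \<le> exp 1 * (1 - d) ^ (k - 1)"
  proof -
    have "(1 - q) ^ (k - 1) \<le> 1" using assms d1 by (intro power_le_one) auto
    also have "1 \<le> exp 1 * (1 - d) ^ (k - 1)"
      using assms True by (intro exp_bound) auto
    finally show ?thesis .
  qed
  have "q ^ (n - 1 - k) * (1 - q) ^ (k - 1) \<le> d ^ (n - 1 - k) * (exp 1 * (1 - d) ^ (k - 1))"
    using a b assms d1 by (intro mult_mono) auto
  then have "C * (q ^ (n - 1 - k) * (1 - q) ^ (k - 1)) \<le> C * (d ^ (n - 1 - k) * (exp 1 * (1 - d) ^ (k - 1)))"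
    using C0 by (rule mult_left_mono)
  moreover have "dd n k q = C * (q ^ (n - 1 - k) * (1 - q) ^ (k - 1))"
    using True unfolding dd_def C_def by (simp only: if_True simp_thms mult.assoc)
  moreover have "exp 1 * dd n k d = C * (d ^ (n - 1 - k) * (exp 1 * (1 - d) ^ (k - 1)))"
    using True unfolding dd_def C_def by (simp only: if_True simp_thms mult_ac)
  ultimately show ?thesis by metis
next
  case False
  then have "dd n k q = 0" "dd n k d = 0" by (auto simp: dd_def)
  then show ?thesis by simp
qed

lemma dd_high:
  fixes d q :: real
  assumes "n \<ge> 1" "1 - d \<le> q" "q \<le> 1" "0 \<le> d" "d \<le> 1 / real n"
  shows "dd n k q \<le> exp 1 * dd n k (1 - d)"
proof (cases "1 \<le> k \<and> k < n")
  case True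
  define C where "C = real (n - 1) * real (n - 1 - 1 choose (k - 1))"
  have C0: "0 \<le> C" by (simp add: C_def)
  have d1: "d \<le> 1" using assms by (smt (verit) divide_le_eq_1 of_nat_1 of_nat_mono)
  have a: "(1 - q) ^ (k - 1) \<le> d ^ (k - 1)" using assms by (intro power_mono) auto
  have b: "q ^ (n - 1 - k) \<le> exp 1 * (1 - d) ^ (n - 1 - k)"
  proof -
    have "q ^ (n - 1 - k) \<le> 1" using assms d1 by (intro power_le_one) auto
    also have "1 \<le> exp 1 * (1 - d) ^ (n - 1 - k)"
      using assms True by (intro exp_bound) auto
    finally show ?thesis .
  qed
  have "q ^ (n - 1 - k) * (1 - q) ^ (k - 1) \<le> (exp 1 * (1 - d) ^ (n - 1 - k)) * d ^ (k - 1)"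
    using a b assms d1 by (intro mult_mono) auto
  then have "C * (q ^ (n - 1 - k) * (1 - q) ^ (k - 1)) \<le> C * ((exp 1 * (1 - d) ^ (n - 1 - k)) * d ^ (k - 1))"
    using C0 by (rule mult_left_mono)
  moreover have "dd n k q = C * (q ^ (n - 1 - k) * (1 - q) ^ (k - 1))"
    using True unfolding dd_def C_def by (simp only: if_True simp_thms mult.assoc)
  moreover have dd2: "1 - (1 - d) = d" by simp
  moreover have "exp 1 * dd n k (1 - d) = C * ((exp 1 * (1 - d) ^ (n - 1 - k)) * d ^ (k - 1))"
    using True unfolding dd_def C_def by (simp only: if_True simp_thms mult_ac dd2)
  ultimately show ?thesis by metis
next
  case False
  then have "dd n k q = 0" "dd n k (1 - d) = 0" by (auto simp: dd_def)
  then show ?thesis by simp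
qed

lemma ind_int:
  fixes a b :: real
  assumes "a \<le> b"
  shows "(indicator {a..b} has_integral (b - a)) UNIV"
proof -
  have "((\<lambda>x. 1::real) has_integral (b - a)) {a..b}"
    using has_integral_const_real[of "1::real" a b] assms by simp
  then have "((\<lambda>x. if x \<in> {a..b} then 1::real else 0) has_integral (b - a)) UNIV"
    unfolding has_integral_restrict_UNIV .
  moreover have "indicator {a..b} = (\<lambda>x. if x \<in> {a..b} then 1::real else 0)"
    by (auto simp: indicator_def fun_eq_iff)
  ultimately show ?thesis by simp
qed

theorem mainTheorem9:
  fixes M :: "real measure" and n N :: nat and x y :: "real \<Rightarrow> real"
  assumes "real_distribution M"
    and "measure M {0..1} = 1"
    and "continuous_on UNIV (cdf M)"
    and "n \<ge> 1"
    and "rank_based_alloc n x"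
    and "rank_based_alloc n y"
    and "N > 0"
    and "deltaN n N \<le> 1 / real n"
  shows "integral ({0..deltaN n N} \<union> {1 - deltaN n N..1}) (\<lambda>q. Zfun y x q * bid_deriv M x q)
     \<le> exp 1 * deltaN n N * deriv y (deltaN n N) + exp 1 * (deltaN n N)^2 * deriv y (1 - deltaN n N)"
proof -
  define d where "d = deltaN n N"
  define U where "U = {0..d} \<union> {1 - d..1}"
  define f where "f = (\<lambda>q. Zfun y x q * bid_deriv M x q)"
  from assms(6) obtain w where w: "w 1 \<le> 1" "\<forall>k\<in>{1..<n}. w (Suc k) \<le> w k" "0 \<le> w n"
    "y = rank_alloc n w" unfolding rank_based_alloc_def by blast
  define c where "c k = w k - (if k = n then 0 else w (Suc k))" for k
  have c0: "0 \<le> c k" if "k \<in> {1..n}" for k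
    using that w by (auto simp: c_def)
  define Y where "Y q = (\<Sum>k=1..n. c k * dd n k q)" for q
  have dY: "deriv y q = Y q" for q
    unfolding w(4) Y_def c_def by (rule DERIV_imp_deriv[OF rank_deriv])
  have Y0: "0 \<le> Y q" if "0 \<le> q" "q \<le> 1" for q
    unfolding Y_def using c0 dd_nonneg[OF that] by (intro sum_nonneg mult_nonneg_nonneg) auto
  have dpos: "0 < d"
  proof -
    have "real n \<le> max (25 * ln (ln (real N))) (real n)" by simp
    moreover have "real n \<ge> 1" using assms(4) by simp
    ultimately show ?thesis using assms(7) by (simp add: d_def deltaN_def)
  qed
  have dle: "d \<le> 1 / real n" using assms(8) d_def by simp
  have d1: "d \<le> 1" using dle assms(4) by (smt (verit) divide_le_eq_1 of_nat_1 of_nat_mono)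
  have Ylow: "Y q \<le> exp 1 * Y d" if "0 \<le> q" "q \<le> d" for q
  proof -
    have "Y q \<le> (\<Sum>k=1..n. c k * (exp 1 * dd n k d))"
      unfolding Y_def using c0 dd_low[OF assms(4) that dle]
      by (intro sum_mono mult_left_mono) auto
    also have "\<dots> = exp 1 * Y d" by (simp add: Y_def sum_distrib_left mult_ac)
    finally show ?thesis .
  qed
  have Yhigh: "Y q \<le> exp 1 * Y (1 - d)" if "1 - d \<le> q" "q \<le> 1" for q
  proof -
    have "Y q \<le> (\<Sum>k=1..n. c k * (exp 1 * dd n k (1 - d)))"
      unfolding Y_def using c0 dd_high[OF assms(4) that _ dle] dpos
      by (intro sum_mono mult_left_mono) auto
    also have "\<dots> = exp 1 * Y (1 - d)" by (simp add: Y_def sum_distrib_left mult_ac)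
    finally show ?thesis .
  qed
  interpret rd: real_distribution M by (rule assms(1))
  have cdf1: "1 \<le> cdf M 1"
  proof -
    have "measure M {0..1} \<le> measure M {..1}"
      by (intro rd.finite_measure_mono) auto
    then show ?thesis using assms(2) by (simp add: cdf_def)
  qed
  have v1: "value_of_quantile M q \<le> 1" if "q \<le> 1" for q
  proof -
    have "1 \<in> {t \<in> {0..1}. q \<le> cdf M t}" using that cdf1 by auto
    moreover have "bdd_below {t \<in> {0..1::real}. q \<le> cdf M t}"
      by (rule bdd_belowI[of _ 0]) auto
    ultimately show ?thesis unfolding value_of_quantile_def by (rule cInf_lower)
  qed
  have fle: "f q \<le> (1 - q) * Y q" if "0 \<le> q" "q \<le> 1" for q
  proof (cases "deriv x q = 0")
    case True
    then have "f q = 0" by (simp add: f_def Zfun_def bid_deriv_def)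
    then show ?thesis using Y0[OF that] that by simp
  next
    case False
    then have "f q = ((1 - q) * Y q) * value_of_quantile M q"
      by (simp add: f_def Zfun_def bid_deriv_def dY)
    also have "\<dots> \<le> (1 - q) * Y q"
      using v1[OF that(2)] Y0[OF that] that by (intro mult_left_le) auto
    finally show ?thesis .
  qed
  define g where "g q = exp 1 * Y d * indicator {0..d} q + exp 1 * d * Y (1 - d) * indicator {1 - d..1} q" for q
  have Yd0: "0 \<le> Y d" "0 \<le> Y (1 - d)" using Y0 dpos d1 by auto
  have fg: "f q \<le> g q" if "q \<in> U" for q
  proof -
    have "0 \<le> exp 1 * Y d * indicator {0..d} q" "0 \<le> exp 1 * d * Y (1 - d) * indicator {1 - d..1} q"
      using Yd0 dpos by auto
    moreover
    { assume q: "q \<in> {0..d}"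
      then have "f q \<le> (1 - q) * Y q" using fle d1 by auto
      also have "\<dots> \<le> Y q" using q Y0[of q] d1 by (intro mult_left_le_one_le) auto
      also have "\<dots> \<le> exp 1 * Y d * indicator {0..d} q" using Ylow q by simp
      finally have "f q \<le> exp 1 * Y d * indicator {0..d} q" . }
    moreover
    { assume q: "q \<in> {1 - d..1}"
      then have "f q \<le> (1 - q) * Y q" using fle d1 by auto
      also have "\<dots> \<le> d * (exp 1 * Y (1 - d))"
        using q Y0[of q] d1 Yhigh[of q] by (intro mult_mono) auto
      also have "\<dots> = exp 1 * d * Y (1 - d) * indicator {1 - d..1} q" using q by simp
      finally have "f q \<le> exp 1 * d * Y (1 - d) * indicator {1 - d..1} q" . }
    ultimately show ?thesis using that unfolding U_def g_def by auto
  qed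
  define I where "I = exp 1 * Y d * d + exp 1 * d * Y (1 - d) * d"
  have gU: "(g has_integral I) U"
  proof -
    have "(g has_integral I) UNIV"
      unfolding g_def I_def
      using ind_int[of 0 d] ind_int[of "1 - d" 1] dpos
      by (intro has_integral_add has_integral_mult_right) auto
    moreover have "(\<lambda>q. if q \<in> U then g q else 0) = g"
    proof
      fix q
      show "(if q \<in> U then g q else 0) = g q"
      proof (cases "q \<in> U")
        case False
        then have n1: "q \<notin> {0..d}" and n2: "q \<notin> {1 - d..1}" unfolding U_def by blast+
        have i1: "indicator {0..d} q = (0::real)" using n1 by (rule indicator_simps(2))
        have i2: "indicator {1 - d..1} q = (0::real)" using n2 by (rule indicator_simps(2))
        from i1 i2 have "g q = 0" unfolding g_def by (simp only: mult_zero_right add_0)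
        then show ?thesis using False by (simp only: if_False)
      qed (simp only: if_True)
    qed
    ultimately show ?thesis using has_integral_restrict_UNIV[of U g I] by (simp only:)
  qed
  have I0: "0 \<le> I" unfolding I_def using Yd0 dpos by auto
  have "integral U f \<le> I"
  proof (cases "f integrable_on U")
    case True
    then show ?thesis using has_integral_le[OF integrable_integral[OF True] gU fg] by simp
  next
    case False
    then show ?thesis using I0 by (simp add: not_integrable_integral)
  qed
  moreover have "I = exp 1 * d * deriv y d + exp 1 * d^2 * deriv y (1 - d)"
    by (simp add: I_def dY power2_eq_square mult_ac)
  ultimately have "integral U f \<le> exp 1 * d * deriv y d + exp 1 * d^2 * deriv y (1 - d)"
    by (simp only:)
  then show ?thesis unfolding U_def f_def d_def .
qed

end
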